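(* For every bounded set $X\subseteq\mathbb{R}^d$ we have $\mathrm{Flt}_d(X)\le\mathrm{Flt}^{\mathbb{R}}_d(X+[0,1]^d)$, where $X+[0,1]^d$ is the Minkowski sum.
   Context: Convex body: non-empty compact convex subset of $\mathbb{R}^d$; $\mathrm{width}(K)=\min_{u\in(\mathbb{Z}^d)^*\setminus\{0\}}\max_{x,y\in K}|u(x)-u(y)|$. A unimodular (resp. $\mathbb{R}$-unimodular) copy of $Y\subseteq\mathbb{R}^d$ is $\{Ay+b:y\in Y\}$ with $A\in\mathrm{GL}(d,\mathbb{Z})$ and $b\in\mathbb{Z}^d$ (resp. $b\in\mathbb{R}^d$). For bounded $X$: $\mathrm{Flt}_d(X)=\sup\{\mathrm{width}(K): K\text{ convex body not containing a unimodular copy of }X\}$ and $\mathrm{Flt}^{\mathbb{R}}_d(X)=\sup\{\mathrm{width}(K): K\text{ convex body not containing an }\mathbb{R}\text{-unimodular copy of }X\}$ (values in $[0,\infty]$). *)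

theory Defs
  imports "HOL-Analysis.Analysis"
begin

definition int_vec :: "real^'n \<Rightarrow> bool" where
  "int_vec x \<longleftrightarrow> (\<forall>i. x $ i \<in> \<int>)"

definition GLZ :: "(real^'n^'n) set" where
  "GLZ = {A. (\<forall>i j. A $ i $ j \<in> \<int>) \<and> (det A = 1 \<or> det A = -1)}"

definition convex_body :: "(real^'n) set \<Rightarrow> bool" where
  "convex_body K \<longleftrightarrow> compact K \<and> convex K \<and> K \<noteq> {}"

text \<open>Lattice width: nonzero functionals in the dual lattice are x \<mapsto> a \<bullet> x with a a nonzero integer vector.\<close>
definition lattice_width :: "(real^'n) set \<Rightarrow> real" where
  "lattice_width K = Inf {Sup {\<bar>a \<bullet> x - a \<bullet> y\<bar> | x y. x \<in> K \<and> y \<in> K} | a. int_vec a \<and> a \<noteq> 0}"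

definition unimodular_copies :: "(real^'n) set \<Rightarrow> (real^'n) set set" where
  "unimodular_copies Y = {(\<lambda>y. A *v y + b) ` Y | A b. A \<in> GLZ \<and> int_vec b}"

definition R_unimodular_copies :: "(real^'n) set \<Rightarrow> (real^'n) set set" where
  "R_unimodular_copies Y = {(\<lambda>y. A *v y + b) ` Y | A b. A \<in> GLZ}"

definition Flt :: "(real^'n) set \<Rightarrow> ereal" where
  "Flt X = Sup {ereal (lattice_width K) | K. convex_body K \<and> (\<forall>C\<in>unimodular_copies X. \<not> C \<subseteq> K)}"

definition FltR :: "(real^'n) set \<Rightarrow> ereal" where
  "FltR X = Sup {ereal (lattice_width K) | K. convex_body K \<and> (\<forall>C\<in>R_unimodular_copies X. \<not> C \<subseteq> K)}"

definition unit_cube :: "(real^'n) set" where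
  "unit_cube = {y. \<forall>i. 0 \<le> y $ i \<and> y $ i \<le> 1}"

definition minkowski_sum :: "(real^'n) set \<Rightarrow> (real^'n) set \<Rightarrow> (real^'n) set" where
  "minkowski_sum A B = {x + y | x y. x \<in> A \<and> y \<in> B}"

end

theory Submission
  imports Defs
begin

lemma int_mulv:
  fixes A :: "real^'n^'n" and v :: "real^'n"
  assumes "\<forall>i j. A $ i $ j \<in> \<int>" "int_vec v"
  shows "int_vec (A *v v)"
  unfolding int_vec_def
proof
  fix i
  show "(A *v v) $ i \<in> \<int>"
    unfolding matrix_vector_mult_def using assms
    by (auto simp: int_vec_def intro!: Ints_sum Ints_mult)
qed

lemma lattice_point_in_cube:
  fixes A :: "real^'n^'n" and b :: "real^'n"
  assumes "A \<in> GLZ"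
  shows "\<exists>c\<in>(unit_cube :: (real^'n) set). int_vec (A *v c + b)"
proof -
  have Aint: "\<forall>i j. A $ i $ j \<in> \<int>" and d: "det A \<noteq> 0"
    using assms by (auto simp: GLZ_def)
  have "invertible A" using d invertible_det_nz by blast
  then obtain B where B: "A ** B = mat 1" unfolding invertible_def by blast
  define w where "w = B *v b"
  have Aw: "A *v w = b" unfolding w_def
    by (simp add: matrix_vector_mul_assoc B)
  define z :: "real^'n" where "z = (\<chi> i. of_int \<lceil>w $ i\<rceil>)"
  define c where "c = z - w"
  have zint: "int_vec z" by (simp add: z_def int_vec_def)
  have cc: "c \<in> unit_cube"
    unfolding unit_cube_def c_def z_def
    using ceiling_correct by (auto simp: algebra_simps) (smt (verit) ceiling_correct)
  have "A *v c + b = A *v z"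
    unfolding c_def by (simp add: matrix_vector_mult_diff_distrib Aw)
  then show ?thesis using cc int_mulv[OF Aint zint] by metis
qed

theorem mainTheorem8:
  fixes X :: "(real^'n) set"
  assumes "bounded X"
  shows "Flt X \<le> FltR (minkowski_sum X (unit_cube :: (real^'n) set))"
  unfolding Flt_def FltR_def
proof (rule Sup_subset_mono, clarsimp)
  fix K :: "(real^'n) set"
  assume cb: "convex_body K" and nc: "\<forall>C\<in>unimodular_copies X. \<not> C \<subseteq> K"
  have "\<forall>C\<in>R_unimodular_copies (minkowski_sum X unit_cube). \<not> C \<subseteq> K"
  proof (clarify)
    fix C assume "C \<in> R_unimodular_copies (minkowski_sum X unit_cube)" "C \<subseteq> K"
    then obtain A b where A: "A \<in> GLZ" and C: "C = (\<lambda>y. A *v y + b) ` minkowski_sum X unit_cube"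
      unfolding R_unimodular_copies_def by blast
    obtain c where c: "c \<in> unit_cube" "int_vec (A *v c + b)"
      using lattice_point_in_cube[OF A] by blast
    have "(\<lambda>y. A *v y + (A *v c + b)) ` X \<in> unimodular_copies X"
      unfolding unimodular_copies_def using A c(2) by blast
    moreover have "(\<lambda>y. A *v y + (A *v c + b)) ` X \<subseteq> C"
    proof
      fix v assume "v \<in> (\<lambda>y. A *v y + (A *v c + b)) ` X"
      then obtain x where x: "x \<in> X" "v = A *v x + (A *v c + b)" by blast
      have "x + c \<in> minkowski_sum X unit_cube"
        unfolding minkowski_sum_def using x c by blast
      moreover have "v = A *v (x + c) + b" using x by (simp add: matrix_vector_right_distrib)
      ultimately show "v \<in> C" unfolding C by blast
    qed
    ultimately show False using nc \<open>C \<subseteq> K\<close> by blast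
  qed
  then show "\<exists>K'. lattice_width K = lattice_width K' \<and> convex_body K' \<and>
      (\<forall>C\<in>R_unimodular_copies (minkowski_sum X unit_cube). \<not> C \<subseteq> K')"
    using cb by blast
qed

end
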